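(* Let $H$ be a Hermitian operator on a $d$-dimensional Hilbert space with spectral decomposition $H=\sum_{i=1}^M\lambda_i\Pi_i$, where $M\ge 2$, $\lambda_M>\cdots>\lambda_1$ are the distinct eigenvalues and $\Pi_i$ the spectral projections ($\Pi_i\Pi_j=\delta_{ij}\Pi_i$, $\sum_i\Pi_i=I$). Let $\Delta=\lambda_2-\lambda_1$ and $d_G=\operatorname{Tr}[\Pi_1]$, and write $\gamma=\frac{\Pi_1}{\operatorname{Tr}[\Pi_1]}$, $\tau_\beta=\frac{e^{-\beta H}}{\operatorname{Tr}[e^{-\beta H}]}$. Then for every $\beta\ge 0$, $$D(\gamma\|\tau_\beta)=\ln\!\left(1+\frac{\sum_{i=2}^Me^{-\beta(\lambda_i-\lambda_1)}\operatorname{Tr}[\Pi_i]}{d_G}\right)\le\ln\!\left(1+e^{-\beta\Delta}\left(\frac{d-d_G}{d_G}\right)\right),$$ and moreover, for all $\alpha\in(0,1)\cup(1,\infty)$, $$D(\gamma\|\tau_\beta)=D_\alpha(\gamma\|\tau_\beta)=\widetilde{D}_\alpha(\gamma\|\tau_\beta)=\widehat{D}_\alpha(\gamma\|\tau_\beta).$$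
   Context: For states $\rho,\sigma$: the quantum relative entropy is $D(\rho\|\sigma)=\operatorname{Tr}[\rho(\ln\rho-\ln\sigma)]$; the Petz–Rényi relative entropy is $D_\alpha(\rho\|\sigma)=\frac{1}{\alpha-1}\ln\operatorname{Tr}[\rho^\alpha\sigma^{1-\alpha}]$; the sandwiched Rényi relative entropy is $\widetilde{D}_\alpha(\rho\|\sigma)=\frac{1}{\alpha-1}\ln\operatorname{Tr}\!\left[\left(\sigma^{\frac{1-\alpha}{2\alpha}}\rho\,\sigma^{\frac{1-\alpha}{2\alpha}}\right)^\alpha\right]$; the geometric Rényi relative entropy is $\widehat{D}_\alpha(\rho\|\sigma)=\frac{1}{\alpha-1}\ln\operatorname{Tr}\!\left[\sigma\left(\sigma^{-1/2}\rho\,\sigma^{-1/2}\right)^\alpha\right]$ (here $\sigma$ is full rank). *)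

theory Defs
  imports "HOL-Analysis.Analysis"
begin

text \<open>Complex d x d matrices are modelled as complex^'n^'n with d = CARD('n).\<close>

definition cadj :: "complex^'n^'n \<Rightarrow> complex^'n^'n" where
  "cadj A = (\<chi> i j. cnj (A $ j $ i))"

definition hermitian :: "complex^'n^'n \<Rightarrow> bool" where
  "hermitian A \<longleftrightarrow> cadj A = A"

definition unitary :: "complex^'n^'n \<Rightarrow> bool" where
  "unitary U \<longleftrightarrow> U ** cadj U = mat 1 \<and> cadj U ** U = mat 1"

definition rdiag :: "('n \<Rightarrow> real) \<Rightarrow> complex^'n^'n" where
  "rdiag d = (\<chi> i j. if i = j then complex_of_real (d i) else 0)"

definition mfun :: "(real \<Rightarrow> real) \<Rightarrow> complex^'n^'n \<Rightarrow> complex^'n^'n" where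
  "mfun f A = (SOME B. \<exists>U d. unitary U \<and> A = U ** rdiag d ** cadj U
                         \<and> B = U ** rdiag (\<lambda>i. f (d i)) ** cadj U)"

text \<open>Logarithm on the support (convention 0 ln 0 = 0), real powers (0 powr a = 0).\<close>
definition mln :: "complex^'n^'n \<Rightarrow> complex^'n^'n" where
  "mln A = mfun (\<lambda>x. if x > 0 then ln x else 0) A"

definition mpow :: "complex^'n^'n \<Rightarrow> real \<Rightarrow> complex^'n^'n" where
  "mpow A a = mfun (\<lambda>x. x powr a) A"

definition mexp :: "complex^'n^'n \<Rightarrow> complex^'n^'n" where
  "mexp A = mfun exp A"

definition rel_ent :: "complex^'n^'n \<Rightarrow> complex^'n^'n \<Rightarrow> real" where
  "rel_ent \<rho> \<sigma> = Re (trace (\<rho> ** (mln \<rho> - mln \<sigma>)))"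

definition petz_renyi :: "real \<Rightarrow> complex^'n^'n \<Rightarrow> complex^'n^'n \<Rightarrow> real" where
  "petz_renyi \<alpha> \<rho> \<sigma> = 1 / (\<alpha> - 1) * ln (Re (trace (mpow \<rho> \<alpha> ** mpow \<sigma> (1 - \<alpha>))))"

definition sandwiched_renyi :: "real \<Rightarrow> complex^'n^'n \<Rightarrow> complex^'n^'n \<Rightarrow> real" where
  "sandwiched_renyi \<alpha> \<rho> \<sigma> = 1 / (\<alpha> - 1) * ln (Re (trace (mpow
     (mpow \<sigma> ((1 - \<alpha>) / (2 * \<alpha>)) ** \<rho> ** mpow \<sigma> ((1 - \<alpha>) / (2 * \<alpha>))) \<alpha>)))"

definition geometric_renyi :: "real \<Rightarrow> complex^'n^'n \<Rightarrow> complex^'n^'n \<Rightarrow> real" where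
  "geometric_renyi \<alpha> \<rho> \<sigma> = 1 / (\<alpha> - 1) * ln (Re (trace (\<sigma> ** mpow
     (mpow \<sigma> (-1/2) ** \<rho> ** mpow \<sigma> (-1/2)) \<alpha>)))"

end

theory Submission imports Defs begin

lemma rdiag_mult_left: "(rdiag e ** W) $ j $ k = complex_of_real (e j) * W $ j $ k"
proof -
  have "(rdiag e ** W) $ j $ k = (\<Sum>l\<in>UNIV. (if j = l then complex_of_real (e j) else 0) * W $ l $ k)"
    unfolding rdiag_def matrix_matrix_mult_def by (auto intro!: sum.cong)
  also have "\<dots> = (\<Sum>l\<in>UNIV. if j = l then complex_of_real (e j) * W $ l $ k else 0)"
    by (rule sum.cong) auto
  finally show ?thesis by simp
qed

lemma rdiag_mult_right: "(W ** rdiag e) $ j $ k = W $ j $ k * complex_of_real (e k)"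
  unfolding rdiag_def matrix_matrix_mult_def
  by (simp add: if_distrib cong: if_cong)

lemma rdiag_mult: "rdiag a ** rdiag b = rdiag (\<lambda>i. a i * b i)"
  by (simp add: vec_eq_iff rdiag_mult_left) (simp add: rdiag_def)

lemma mfun_unique:
  assumes U: "unitary U" and V: "unitary V"
    and eq: "U ** rdiag d ** cadj U = V ** rdiag e ** cadj V"
  shows "U ** rdiag (\<lambda>i. f (d i)) ** cadj U = V ** rdiag (\<lambda>i. f (e i)) ** cadj V"
proof -
  define W where "W = cadj V ** U"
  have UU: "U ** cadj U = mat 1" "cadj U ** U = mat 1" using U unfolding unitary_def by auto
  have VV: "V ** cadj V = mat 1" "cadj V ** V = mat 1" using V unfolding unitary_def by auto
  have "rdiag e ** W = cadj V ** (V ** rdiag e ** cadj V) ** U"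
    unfolding W_def by (simp add: matrix_mul_assoc VV)
  also have "\<dots> = cadj V ** (U ** rdiag d ** cadj U) ** U" using eq by simp
  also have "\<dots> = W ** rdiag d"
    unfolding W_def by (simp add: matrix_mul_assoc[symmetric] UU)
  finally have EW: "rdiag e ** W = W ** rdiag d" .
  have FW: "rdiag (\<lambda>i. f (e i)) ** W = W ** rdiag (\<lambda>i. f (d i))"
  proof -
    have "complex_of_real (f (e j)) * W $ j $ k = W $ j $ k * complex_of_real (f (d k))" for j k
    proof -
    have "complex_of_real (e j) * W $ j $ k = W $ j $ k * complex_of_real (d k)"
      using EW by (metis rdiag_mult_left rdiag_mult_right)
    then have "W $ j $ k = 0 \<or> e j = d k" by (auto simp: mult.commute)
    then show "complex_of_real (f (e j)) * W $ j $ k = W $ j $ k * complex_of_real (f (d k))"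
      by auto
    qed
    then show ?thesis by (simp add: vec_eq_iff rdiag_mult_left rdiag_mult_right)
  qed
  have "V ** rdiag (\<lambda>i. f (e i)) ** cadj V = V ** rdiag (\<lambda>i. f (e i)) ** cadj V ** (U ** cadj U)"
    by (simp add: UU)
  also have "\<dots> = V ** (rdiag (\<lambda>i. f (e i)) ** W) ** cadj U"
    unfolding W_def by (simp add: matrix_mul_assoc)
  also have "\<dots> = V ** (W ** rdiag (\<lambda>i. f (d i))) ** cadj U" by (simp add: FW)
  also have "\<dots> = (V ** cadj V) ** U ** rdiag (\<lambda>i. f (d i)) ** cadj U"
    unfolding W_def by (simp add: matrix_mul_assoc)
  finally show ?thesis by (simp add: VV)
qed

lemma mfun_diag:
  assumes U: "unitary U"
  shows "mfun f (U ** rdiag d ** cadj U) = U ** rdiag (\<lambda>i. f (d i)) ** cadj U"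
proof -
  have ex: "\<exists>B. \<exists>V e. unitary V \<and> U ** rdiag d ** cadj U = V ** rdiag e ** cadj V
                         \<and> B = V ** rdiag (\<lambda>i. f (e i)) ** cadj V"
    using U by blast
  from someI_ex[OF ex] obtain V e where V: "unitary V"
    and eq: "U ** rdiag d ** cadj U = V ** rdiag e ** cadj V"
    and B: "mfun f (U ** rdiag d ** cadj U) = V ** rdiag (\<lambda>i. f (e i)) ** cadj V"
    unfolding mfun_def by blast
  show ?thesis using mfun_unique[OF U V eq, of f] B by simp
qed

definition cinner :: "complex^'n \<Rightarrow> complex^'n \<Rightarrow> complex" where
  "cinner x y = (\<Sum>k\<in>UNIV. x $ k * cnj (y $ k))"

lemma cinner_adj: "cinner (A *v x) y = cinner x (cadj A *v y)"
proof -
  have "cinner (A *v x) y = (\<Sum>k\<in>UNIV. \<Sum>l\<in>UNIV. A $ k $ l * x $ l * cnj (y $ k))"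
    unfolding cinner_def matrix_vector_mult_def by (simp add: sum_distrib_right)
  also have "\<dots> = (\<Sum>l\<in>UNIV. \<Sum>k\<in>UNIV. A $ k $ l * x $ l * cnj (y $ k))"
    by (rule sum.swap)
  also have "\<dots> = cinner x (cadj A *v y)"
    unfolding cinner_def matrix_vector_mult_def cadj_def
    by (simp add: sum_distrib_left cnj_sum mult_ac)
  finally show ?thesis .
qed

lemma cinner_herm: "hermitian A \<Longrightarrow> cinner (A *v x) y = cinner x (A *v y)"
  by (simp add: cinner_adj hermitian_def)

lemma cinner_add: "cinner (x + y) z = cinner x z + cinner y z"
  by (simp add: cinner_def sum.distrib distrib_right)
lemma cinner_diff: "cinner (x - y) z = cinner x z - cinner y z"
  by (simp add: cinner_def sum_subtractf left_diff_distrib)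
lemma cinner_smult: "cinner (c *s x) z = c * cinner x z"
  by (simp add: cinner_def sum_distrib_left mult_ac)
lemma cinner_smult_right: "cinner x (c *s z) = cnj c * cinner x z"
  by (simp add: cinner_def sum_distrib_left mult_ac)
lemma cinner_zero[simp]: "cinner 0 z = 0" "cinner z 0 = 0"
  by (auto simp: cinner_def)
lemma cinner_sum: "cinner (\<Sum>i\<in>A. f i) z = (\<Sum>i\<in>A. cinner (f i) z)"
  by (induction A rule: infinite_finite_induct) (auto simp: cinner_add)
lemma cinner_sym: "cinner x y = cnj (cinner y x)"
  by (simp add: cinner_def cnj_sum mult.commute)
lemma cinner_self: "cinner x x = complex_of_real (\<Sum>k\<in>UNIV. (cmod (x $ k))^2)"
  unfolding cinner_def of_real_sum by (rule sum.cong[OF refl]) (simp add: complex_mult_cnj cmod_power2)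
lemma cinner_self_pos: "x \<noteq> 0 \<Longrightarrow> Re (cinner x x) > 0"
proof -
  assume "x \<noteq> 0"
  then obtain k where k: "x $ k \<noteq> 0" by (auto simp: vec_eq_iff)
  have "(cmod (x $ k))^2 \<le> (\<Sum>k\<in>UNIV. (cmod (x $ k))^2)"
    by (rule member_le_sum) auto
  moreover have "(cmod (x $ k))^2 > 0" using k by simp
  ultimately show ?thesis unfolding cinner_self Re_complex_of_real by linarith
qed

lemma mv_sum: "(\<Sum>i\<in>A. f i) *v x = (\<Sum>i\<in>A. f i *v x)"
  by (induction A rule: infinite_finite_induct) (auto simp: matrix_vector_mult_add_rdistrib)

context
  fixes M :: nat and P :: "nat \<Rightarrow> complex^'n^'n"
  assumes herm: "\<And>i. 1 \<le> i \<Longrightarrow> i \<le> M \<Longrightarrow> hermitian (P i)"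
    and orth: "\<And>i j. 1 \<le> i \<Longrightarrow> i \<le> M \<Longrightarrow> 1 \<le> j \<Longrightarrow> j \<le> M \<Longrightarrow>
           P i ** P j = (if i = j then P i else 0)"
    and psum: "(\<Sum>i=1..M. P i) = mat 1"
begin

definition ES :: "(complex^'n) set \<Rightarrow> bool" where
  "ES S \<longleftrightarrow> finite S \<and> (\<forall>s\<in>S. cinner s s = 1) \<and> (\<forall>s\<in>S. \<forall>t\<in>S. s \<noteq> t \<longrightarrow> cinner s t = 0)
     \<and> (\<forall>s\<in>S. \<exists>i\<in>{1..M}. P i *v s = s)"

lemma PP_v: "i \<in> {1..M} \<Longrightarrow> j \<in> {1..M} \<Longrightarrow> P i *v (P j *v x) = (if i = j then P j *v x else 0)"
  using orth[of i j] by (auto simp: matrix_vector_mul_assoc)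

lemma Psum_v: "(\<Sum>i=1..M. P i *v x) = x"
  using psum by (metis matrix_vector_mul_lid mv_sum)

lemma P_eig: "i \<in> {1..M} \<Longrightarrow> j \<in> {1..M} \<Longrightarrow> P j *v t = t \<Longrightarrow> P i *v t = (if i = j then t else 0)"
  using PP_v[of i j t] by simp

lemma ES_indep: assumes "ES S" shows "vec.independent S"
proof
  assume "vec.dependent S"
  moreover have fin: "finite S" using assms by (simp add: ES_def)
  ultimately obtain u v where v: "v \<in> S" "u v \<noteq> 0" and z: "(\<Sum>w\<in>S. u w *s w) = 0"
    using vec.dependent_finite by blast
  have "0 = cinner (\<Sum>w\<in>S. u w *s w) v" using z by simp
  also have "\<dots> = (\<Sum>w\<in>S. u w * cinner w v)" by (simp add: cinner_sum cinner_smult)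
  also have "\<dots> = (\<Sum>w\<in>S. if w = v then u v else 0)"
    using assms v by (intro sum.cong) (auto simp: ES_def)
  also have "\<dots> = u v" using v fin by simp
  finally show False using v by simp
qed

lemma ES_step:
  assumes S: "ES S" and c: "card S < CARD('n)"
  shows "\<exists>v. v \<notin> S \<and> ES (insert v S)"
proof -
  have fin: "finite S" using S by (simp add: ES_def)
  have "\<not> UNIV \<subseteq> vec.span S"
  proof
    assume "UNIV \<subseteq> vec.span S"
    then have "vec.dim (UNIV :: (complex^'n) set) \<le> card S" using vec.dim_le_card fin by blast
    then show False using c vec_dim_card[where ?'a=complex and ?'n='n] by linarith
  qed
  then obtain w where w: "w \<notin> vec.span S" by auto
  define w' where "w' = w - (\<Sum>s\<in>S. cinner w s *s s)"
  have w'0: "w' \<noteq> 0"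
  proof
    assume "w' = 0"
    then have "w = (\<Sum>s\<in>S. cinner w s *s s)" by (simp add: w'_def)
    also have "\<dots> \<in> vec.span S" by (intro vec.span_sum vec.span_scale vec.span_base)
    finally show False using w by simp
  qed
  have w'orth: "cinner w' t = 0" if t: "t \<in> S" for t
  proof -
    have "cinner (\<Sum>s\<in>S. cinner w s *s s) t = (\<Sum>s\<in>S. cinner w s * cinner s t)"
      by (simp add: cinner_sum cinner_smult)
    also have "\<dots> = (\<Sum>s\<in>S. if s = t then cinner w t else 0)"
      using S t by (intro sum.cong) (auto simp: ES_def)
    also have "\<dots> = cinner w t" using t fin by simp
    finally show ?thesis by (simp add: w'_def cinner_diff)
  qed
  have "\<exists>i\<in>{1..M}. P i *v w' \<noteq> 0"
  proof (rule ccontr)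
    assume "\<not> ?thesis"
    then have "(\<Sum>i=1..M. P i *v w') = 0" by simp
    then show False using Psum_v w'0 by simp
  qed
  then obtain i where i: "i \<in> {1..M}" and v0: "P i *v w' \<noteq> 0" by blast
  define v0 where "v0 = P i *v w'"
  have Pv0: "P i *v v0 = v0" using PP_v[OF i i] by (simp add: v0_def)
  have v0orth: "cinner v0 t = 0" if t: "t \<in> S" for t
  proof -
    obtain j where j: "j \<in> {1..M}" "P j *v t = t" using S t by (auto simp: ES_def)
    have "cinner v0 t = cinner w' (P i *v t)" unfolding v0_def
      using herm i by (simp add: cinner_herm)
    also have "\<dots> = 0" using P_eig[OF i j] w'orth[OF t] by simp
    finally show ?thesis .
  qed
  define r where "r = Re (cinner v0 v0)"
  have r: "r > 0" using cinner_self_pos v0 by (simp add: r_def v0_def)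
  have rr: "cinner v0 v0 = complex_of_real r" unfolding r_def cinner_self by simp
  define v where "v = complex_of_real (1 / sqrt r) *s v0"
  have vv: "cinner v v = 1"
    using r by (simp add: v_def cinner_smult cinner_smult_right rr flip: of_real_mult)
  have vorth: "cinner v t = 0" if "t \<in> S" for t
    using v0orth[OF that] by (simp add: v_def cinner_smult)
  have Pv: "P i *v v = v" by (simp add: v_def vec.scale Pv0)
  have vS: "v \<notin> S" using vorth vv by force
  have vorth': "cinner t v = 0" if "t \<in> S" for t
    using vorth[OF that] cinner_sym[of t v] by simp
  have "ES (insert v S)"
    unfolding ES_def
  proof (intro conjI)
    show "finite (insert v S)" using fin by simp
    show "\<forall>s\<in>insert v S. cinner s s = 1" using S vv by (simp add: ES_def)
    show "\<forall>s\<in>insert v S. \<forall>t\<in>insert v S. s \<noteq> t \<longrightarrow> cinner s t = 0"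
      using S vorth vorth' unfolding ES_def by blast
    show "\<forall>s\<in>insert v S. \<exists>i\<in>{1..M}. P i *v s = s"
      using S Pv i unfolding ES_def by blast
  qed
  with vS show ?thesis by blast
qed

lemma ES_card: "m \<le> CARD('n) \<Longrightarrow> \<exists>S. ES S \<and> card S = m"
proof (induction m)
  case 0
  have "ES {}" by (simp add: ES_def)
  then show ?case by force
next
  case (Suc m)
  then obtain S where S: "ES S" "card S = m" by auto
  then obtain v where v: "v \<notin> S" "ES (insert v S)" using ES_step Suc.prems by fastforce
  have "card (insert v S) = Suc m" using v S by (simp add: ES_def)
  with v show ?case by blast
qed

lemma diag_exists:
  "\<exists>U g. unitary U \<and> (\<forall>k. g k \<in> {1..M}) \<and>
     (\<forall>i\<in>{1..M}. P i = U ** rdiag (\<lambda>k. if g k = i then 1 else 0) ** cadj U)"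
proof -
  obtain S where S: "ES S" "card S = CARD('n)" using ES_card by blast
  have fin: "finite S" using S by (simp add: ES_def)
  obtain e where e: "bij_betw e (UNIV :: 'n set) S"
    using finite_same_card_bij[of "UNIV :: 'n set" S] fin S by auto
  have eS: "e k \<in> S" for k using e by (auto simp: bij_betw_def)
  have einj: "e j = e k \<Longrightarrow> j = k" for j k using e by (auto simp: bij_betw_def inj_def)
  have eon: "cinner (e k) (e j) = (if j = k then 1 else 0)" for j k
    using S eS[of j] eS[of k] einj[of j k] unfolding ES_def by metis
  define U :: "complex^'n^'n" where "U = (\<chi> r k. e k $ r)"
  have UU: "cadj U ** U = mat 1"
    by (simp add: vec_eq_iff U_def cadj_def matrix_matrix_mult_def mat_def
          eon[symmetric] cinner_def mult.commute)
  then have UU': "U ** cadj U = mat 1" using matrix_left_right_inverse by blast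
  have Uu: "unitary U" using UU UU' by (simp add: unitary_def)
  define g where "g k = (SOME i. i \<in> {1..M} \<and> P i *v e k = e k)" for k
  have g: "g k \<in> {1..M} \<and> P (g k) *v e k = e k" for k
  proof -
    have "\<exists>i. i \<in> {1..M} \<and> P i *v e k = e k" using S eS[of k] unfolding ES_def by blast
    then show ?thesis unfolding g_def by (rule someI_ex)
  qed
  have "P i = U ** rdiag (\<lambda>k. if g k = i then 1 else 0) ** cadj U" if i: "i \<in> {1..M}" for i
  proof -
    have Pe: "P i *v e k = (if g k = i then e k else 0)" for k
      using P_eig[OF i, of "g k" "e k"] g[of k] by auto
    have "P i ** U = U ** rdiag (\<lambda>k. if g k = i then 1 else 0)"
    proof -
      have "(P i ** U) $ r $ k = (U ** rdiag (\<lambda>k. if g k = i then 1 else 0)) $ r $ k" for r k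
      proof -
        have "(P i ** U) $ r $ k = (P i *v e k) $ r"
          by (simp add: U_def matrix_matrix_mult_def matrix_vector_mult_def)
        then show ?thesis using Pe[of k] by (simp add: rdiag_mult_right U_def)
      qed
      then show ?thesis by (simp add: vec_eq_iff)
    qed
    then have "P i ** (U ** cadj U) = U ** rdiag (\<lambda>k. if g k = i then 1 else 0) ** cadj U"
      by (simp add: matrix_mul_assoc)
    then show ?thesis using UU' by simp
  qed
  then show ?thesis using Uu g by blast
qed

end


definition Qm :: "nat \<Rightarrow> (nat \<Rightarrow> complex^'n^'n) \<Rightarrow> (nat \<Rightarrow> real) \<Rightarrow> complex^'n^'n" where
  "Qm M P c = (\<Sum>i=1..M. c i *\<^sub>R P i)"

lemma cscaleR: "c *\<^sub>R (z::complex) = complex_of_real c * z"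
  by (simp add: scaleR_conv_of_real)

lemma rdiag_add: "rdiag (\<lambda>k. a k + b k) = rdiag a + rdiag b"
  by (simp add: rdiag_def vec_eq_iff)
lemma rdiag_scale: "rdiag (\<lambda>k. c * a k) = c *\<^sub>R rdiag a"
  by (simp add: rdiag_def vec_eq_iff cscaleR)
lemma rdiag_zero: "rdiag (\<lambda>k. 0) = 0"
  by (simp add: rdiag_def vec_eq_iff)
lemma rdiag_sum: "rdiag (\<lambda>k. \<Sum>i\<in>A. c i * h i k) = (\<Sum>i\<in>A. c i *\<^sub>R rdiag (h i))"
  by (induction A rule: infinite_finite_induct) (auto simp: rdiag_zero rdiag_add rdiag_scale)

lemma mmul_scaleR_right: "(A :: complex^'m^'k) ** (c *\<^sub>R (B :: complex^'p^'m)) = c *\<^sub>R (A ** B)"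
  by (simp add: vec_eq_iff matrix_matrix_mult_def cscaleR sum_distrib_left mult_ac)
lemma mmul_scaleR_left: "(c *\<^sub>R (A :: complex^'m^'k)) ** (B :: complex^'p^'m) = c *\<^sub>R (A ** B)"
  by (simp add: vec_eq_iff matrix_matrix_mult_def cscaleR sum_distrib_left mult_ac)
lemma mmul_add_rdistrib: "(A + B) ** C = A ** C + B ** C"
  by (simp add: vec_eq_iff matrix_matrix_mult_def sum.distrib distrib_right)

lemma conj_sum: "(U :: complex^'n^'n) ** (\<Sum>i\<in>A. c i *\<^sub>R D i) ** (V :: complex^'n^'n) = (\<Sum>i\<in>A. c i *\<^sub>R (U ** D i ** V))"
  by (induction A rule: infinite_finite_induct)
     (auto simp: matrix_add_ldistrib mmul_add_rdistrib mmul_scaleR_right mmul_scaleR_left)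

context
  fixes M :: nat and P :: "nat \<Rightarrow> complex^'n^'n" and U :: "complex^'n^'n" and g :: "'n \<Rightarrow> nat"
  assumes Uu: "unitary U" and gr: "\<forall>k. g k \<in> {1..M}"
    and Pd: "\<forall>i\<in>{1..M}. P i = U ** rdiag (\<lambda>k. if g k = i then 1 else 0) ** cadj U"
begin

lemma Q_diag: "Qm M P c = U ** rdiag (\<lambda>k. c (g k)) ** cadj U"
proof -
  have "(\<lambda>k. c (g k)) = (\<lambda>k. \<Sum>i\<in>{1..M}. c i * (if g k = i then 1 else 0))"
    using gr by (auto simp: if_distrib cong: if_cong)
  then have rd: "rdiag (\<lambda>k. c (g k)) = (\<Sum>i\<in>{1..M}. c i *\<^sub>R rdiag (\<lambda>k. if g k = i then 1 else 0))"
    using rdiag_sum[of c "\<lambda>i k. if g k = i then 1 else 0" "{1..M}"] by simp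
  show ?thesis unfolding Qm_def rd conj_sum using Pd by (auto intro!: sum.cong)
qed

lemma Q_mfun: "mfun f (Qm M P c) = Qm M P (\<lambda>i. f (c i))"
  unfolding Q_diag using mfun_diag[OF Uu] by simp

lemma Q_mult: "Qm M P a ** Qm M P b = Qm M P (\<lambda>i. a i * b i)"
proof -
  have UU: "cadj U ** U = mat 1" using Uu by (simp add: unitary_def)
  have "Qm M P a ** Qm M P b = U ** rdiag (\<lambda>k. a (g k)) ** (cadj U ** U) ** rdiag (\<lambda>k. b (g k)) ** cadj U"
    unfolding Q_diag by (simp add: matrix_mul_assoc)
  also have "\<dots> = U ** (rdiag (\<lambda>k. a (g k)) ** rdiag (\<lambda>k. b (g k))) ** cadj U"
    by (simp add: UU matrix_mul_assoc)
  finally show ?thesis unfolding Q_diag rdiag_mult .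
qed

lemma Q_trace: "trace (Qm M P c) = complex_of_real (\<Sum>k\<in>UNIV. c (g k))"
proof -
  have UU: "cadj U ** U = mat 1" using Uu by (simp add: unitary_def)
  have "trace (Qm M P c) = trace (cadj U ** (U ** rdiag (\<lambda>k. c (g k))))"
    unfolding Q_diag by (rule trace_mul_sym)
  also have "\<dots> = trace (rdiag (\<lambda>k. c (g k)))" by (simp add: matrix_mul_assoc UU)
  finally show ?thesis by (simp add: trace_def rdiag_def)
qed

lemma Q_P: assumes "i \<in> {1..M}" shows "P i = Qm M P (\<lambda>j. if j = i then 1 else 0)"
proof -
  have "Qm M P (\<lambda>j. if j = i then 1 else 0) = (\<Sum>j=1..M. if j = i then P j else 0)"
    unfolding Qm_def by (rule sum.cong) auto
  then show ?thesis using assms by simp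
qed

lemma Q_diff: "Qm M P a - Qm M P b = Qm M P (\<lambda>i. a i - b i)"
  unfolding Qm_def by (simp add: sum_subtractf scaleR_diff_left)
lemma Q_scale: "r *\<^sub>R Qm M P a = Qm M P (\<lambda>i. r * a i)"
  unfolding Qm_def by (simp add: scaleR_sum_right)
lemma Q_neg: "- Qm M P a = Qm M P (\<lambda>i. - a i)"
  unfolding Qm_def by (simp add: sum_negf)

lemma sum_swap_g: "(\<Sum>k\<in>UNIV. (f :: nat \<Rightarrow> real) (g k)) = (\<Sum>i=1..M. f i * (\<Sum>k\<in>UNIV. if g k = i then 1 else 0))"
proof -
  have "(\<Sum>i=1..M. f i * (\<Sum>k\<in>UNIV. if g k = i then 1 else 0))
      = (\<Sum>i=1..M. \<Sum>k\<in>UNIV. if g k = i then f i else 0)"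
  proof (rule sum.cong[OF refl])
    fix i
    have "f i * (\<Sum>k\<in>UNIV. if g k = i then 1 else 0) = (\<Sum>k\<in>UNIV. f i * (if g k = i then 1 else 0))"
      by (rule sum_distrib_left)
    also have "\<dots> = (\<Sum>k\<in>UNIV. if g k = i then f i else 0)" by (rule sum.cong) auto
    finally show "f i * (\<Sum>k\<in>UNIV. if g k = i then 1 else 0) = (\<Sum>k\<in>UNIV. if g k = i then f i else 0)" .
  qed
  also have "\<dots> = (\<Sum>k\<in>UNIV. \<Sum>i=1..M. if g k = i then f i else 0)" by (rule sum.swap)
  also have "\<dots> = (\<Sum>k\<in>UNIV. f (g k))"
    using gr by (intro sum.cong) (auto simp: sum.delta)
  finally show ?thesis by simp
qed

end


lemma renyi_ln: "(\<alpha>::real) \<noteq> 1 \<Longrightarrow> 1 / (\<alpha> - 1) * ln (K powr (1 - \<alpha>)) = - ln K"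
  by (simp add: ln_powr field_simps)

lemma petz_real: assumes "(x::real) > 0" "y > 0"
  shows "(1/x) powr a * y powr (1 - a) * x = (x * y) powr (1 - a)"
  using assms by (simp add: powr_diff powr_divide powr_mult field_simps)

lemma sand_real: assumes "(x::real) > 0" "y > 0" "a \<noteq> 0"
  shows "(y powr ((1 - a) / (2 * a)) * (1/x) * y powr ((1 - a) / (2 * a))) powr a * x = (x * y) powr (1 - a)"
proof -
  define s where "s = (1 - a) / (2 * a)"
  have ss: "s + s = (1 - a) / a" using assms(3) by (simp add: s_def field_simps)
  have "y powr s * (1/x) * y powr s = y powr (s + s) / x"
    unfolding powr_add by simp
  then have h: "y powr s * (1/x) * y powr s = y powr ((1 - a) / a) / x"
    unfolding ss .
  have "(y powr s * (1/x) * y powr s) powr a = (y powr ((1 - a) / a) / x) powr a"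
    by (simp only: h)
  also have "\<dots> = (y powr ((1 - a) / a)) powr a / x powr a" by (rule powr_divide)
  also have "\<dots> = y powr (1 - a) / x powr a" using assms(3) by (simp add: powr_powr)
  finally show ?thesis using assms unfolding s_def[symmetric] by (simp add: powr_diff powr_mult field_simps)
qed

lemma geo_real: assumes "(x::real) > 0" "y > 0"
  shows "y * (y powr (-1/2) * (1/x) * y powr (-1/2)) powr a * x = (x * y) powr (1 - a)"
proof -
  have "y powr (-1/2) * (1/x) * y powr (-1/2) = y powr (-1/2 + -1/2) / x"
    unfolding powr_add by simp
  then have h: "y powr (-1/2) * (1/x) * y powr (-1/2) = y powr (-1) / x"
    by simp
  have "(y powr (-1/2) * (1/x) * y powr (-1/2)) powr a = (y powr (-1) / x) powr a"
    by (simp only: h)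
  also have "\<dots> = (y powr (-1)) powr a / x powr a" by (rule powr_divide)
  also have "\<dots> = y powr (- a) / x powr a" unfolding powr_powr by simp
  finally show ?thesis using assms by (simp add: powr_diff powr_mult powr_minus field_simps)
qed

lemma sum_single:
  fixes f :: "nat \<Rightarrow> real"
  assumes "M \<ge> 1" "\<And>i. 2 \<le> i \<Longrightarrow> i \<le> M \<Longrightarrow> f i = 0"
  shows "(\<Sum>i=1..M. f i) = f 1"
proof -
  have "(\<Sum>i=1..M. f i) = f 1 + (\<Sum>i=Suc 1..M. f i)" using assms(1) by (rule sum.atLeast_Suc_atMost)
  also have "(\<Sum>i=Suc 1..M. f i) = 0" using assms(2) by (intro sum.neutral) auto
  finally show ?thesis by simp
qed

theorem proposition3:
  fixes H :: "complex^'n^'n" and M :: nat and lam :: "nat \<Rightarrow> real"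
    and P :: "nat \<Rightarrow> complex^'n^'n" and \<beta> :: real
  assumes "hermitian H" and "M \<ge> 2"
    and "\<And>i j. 1 \<le> i \<Longrightarrow> i < j \<Longrightarrow> j \<le> M \<Longrightarrow> lam i < lam j"
    and "\<And>i. 1 \<le> i \<Longrightarrow> i \<le> M \<Longrightarrow> hermitian (P i) \<and> P i \<noteq> 0"
    and "\<And>i j. 1 \<le> i \<Longrightarrow> i \<le> M \<Longrightarrow> 1 \<le> j \<Longrightarrow> j \<le> M \<Longrightarrow>
           P i ** P j = (if i = j then P i else 0)"
    and "(\<Sum>i=1..M. P i) = mat 1"
    and "H = (\<Sum>i=1..M. lam i *\<^sub>R P i)"
    and "\<beta> \<ge> 0"
  shows
    "let \<Delta> = lam 2 - lam 1; d = real CARD('n); dG = Re (trace (P 1));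
         \<gamma> = (1 / dG) *\<^sub>R P 1;
         \<tau> = (1 / Re (trace (mexp (- (\<beta> *\<^sub>R H))))) *\<^sub>R mexp (- (\<beta> *\<^sub>R H))
     in rel_ent \<gamma> \<tau> = ln (1 + (\<Sum>i=2..M. exp (- \<beta> * (lam i - lam 1)) * Re (trace (P i))) / dG)
      \<and> ln (1 + (\<Sum>i=2..M. exp (- \<beta> * (lam i - lam 1)) * Re (trace (P i))) / dG)
          \<le> ln (1 + exp (- \<beta> * \<Delta>) * ((d - dG) / dG))
      \<and> (\<forall>\<alpha>. 0 < \<alpha> \<and> \<alpha> \<noteq> 1 \<longrightarrow>
            rel_ent \<gamma> \<tau> = petz_renyi \<alpha> \<gamma> \<tau>
          \<and> rel_ent \<gamma> \<tau> = sandwiched_renyi \<alpha> \<gamma> \<tau>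
          \<and> rel_ent \<gamma> \<tau> = geometric_renyi \<alpha> \<gamma> \<tau>)"
proof -
  have herm: "\<And>i. 1 \<le> i \<Longrightarrow> i \<le> M \<Longrightarrow> hermitian (P i)" using assms(4) by blast
  obtain U g where Uu: "unitary U" and gr: "\<forall>k. g k \<in> {1..M}"
    and Pd: "\<forall>i\<in>{1..M}. P i = U ** rdiag (\<lambda>k. if g k = i then 1 else 0) ** cadj U"
    using diag_exists[of M P, OF herm assms(5) assms(6)] by blast
  define Q where "Q = Qm M P"
  define t where "t i = Re (trace (P i))" for i
  have M1: "M \<ge> 1" using assms(2) by simp
  have Qmf: "mfun f (Q c) = Q (\<lambda>i. f (c i))" for f c
    unfolding Q_def by (rule Q_mfun[OF Uu gr Pd])
  have Qmul: "Q a ** Q b = Q (\<lambda>i. a i * b i)" for a b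
    unfolding Q_def by (rule Q_mult[OF Uu gr Pd])
  have Qdiff: "Q a - Q b = Q (\<lambda>i. a i - b i)" for a b
    unfolding Q_def by (rule Q_diff[OF Uu gr Pd])
  have Qscale: "r *\<^sub>R Q a = Q (\<lambda>i. r * a i)" for r a
    unfolding Q_def by (rule Q_scale[OF Uu gr Pd])
  have Qneg: "- Q a = Q (\<lambda>i. - a i)" for a
    unfolding Q_def by (rule Q_neg[OF Uu gr Pd])
  have QP: "i \<in> {1..M} \<Longrightarrow> P i = Q (\<lambda>j. if j = i then 1 else 0)" for i
    unfolding Q_def by (rule Q_P[OF Uu gr Pd])
  have Qtr0: "Re (trace (Q c)) = (\<Sum>k\<in>UNIV. c (g k))" for c
    unfolding Q_def Q_trace[OF Uu gr Pd] by simp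
  have tform: "t i = (\<Sum>k\<in>UNIV. if g k = i then 1 else 0)" if "i \<in> {1..M}" for i
    unfolding t_def QP[OF that] Qtr0 by (rule sum.cong) auto
  have Qtr: "Re (trace (Q c)) = (\<Sum>i=1..M. c i * t i)" for c
    unfolding Qtr0 sum_swap_g[OF Uu gr Pd] using tform by (intro sum.cong) auto
  have tpos: "t i > 0" if i: "i \<in> {1..M}" for i
  proof (cases "\<exists>k. g k = i")
    case True
    then obtain k where k: "g k = i" by blast
    have "(if g k = i then 1 else 0) \<le> (\<Sum>k\<in>UNIV. if g k = i then 1 else (0::real))"
      by (rule member_le_sum) auto
    then show ?thesis using k tform[OF i] by simp
  next
    case False
    then have "rdiag (\<lambda>k. if g k = i then 1 else 0) = (0 :: complex^'n^'n)"
      by (simp add: rdiag_def vec_eq_iff)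
    then have "P i = 0" using Pd i by simp
    then show ?thesis using assms(4)[of i] i by auto
  qed
  have tsum: "(\<Sum>i=1..M. t i) = real CARD('n)"
  proof -
    have "Re (trace (Q (\<lambda>i. 1))) = real CARD('n)" unfolding Qtr0 by simp
    then show ?thesis unfolding Qtr by simp
  qed
  have HQ: "H = Q lam" unfolding Q_def Qm_def using assms(7) by simp
  define E where "E i = exp (- \<beta> * lam i)" for i
  define Z where "Z = Re (trace (mexp (- (\<beta> *\<^sub>R H))))"
  define S where "S = (\<Sum>i=2..M. exp (- \<beta> * (lam i - lam 1)) * t i)"
  have hmexp: "mexp (- (\<beta> *\<^sub>R H)) = Q E"
    unfolding mexp_def HQ Qscale Qneg Qmf E_def by simp
  have Zs: "Z = (\<Sum>i=1..M. E i * t i)" unfolding Z_def hmexp Qtr ..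
  have Ei: "E 1 * exp (- \<beta> * (lam i - lam 1)) = E i" for i
    unfolding E_def by (simp add: exp_add[symmetric] algebra_simps)
  have ZS: "Z = E 1 * (t 1 + S)"
  proof -
    have "Z = E 1 * t 1 + (\<Sum>i=Suc 1..M. E i * t i)" unfolding Zs using M1 by (rule sum.atLeast_Suc_atMost)
    also have "(\<Sum>i=Suc 1..M. E i * t i) = E 1 * S"
      unfolding S_def sum_distrib_left
    proof (rule sum.cong)
      show "{Suc 1..M} = {2..M}" by simp
    next
      fix i
      have "E i * t i = (E 1 * exp (- \<beta> * (lam i - lam 1))) * t i" by (simp only: Ei)
      then show "E i * t i = E 1 * (exp (- \<beta> * (lam i - lam 1)) * t i)" by (simp only: mult.assoc)
    qed
    finally show ?thesis by (simp add: algebra_simps)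
  qed
  have t1: "t 1 > 0" using tpos M1 by simp
  have S0: "S \<ge> 0" unfolding S_def using tpos by (intro sum_nonneg) (auto intro: less_imp_le)
  have E1: "E 1 > 0" unfolding E_def by simp
  have Zpos: "Z > 0" unfolding ZS using E1 t1 S0 by simp
  define \<tau>1 where "\<tau>1 = E 1 / Z"
  have \<tau>1pos: "\<tau>1 > 0" unfolding \<tau>1_def using E1 Zpos by simp
  define K where "K = t 1 * \<tau>1"
  have Kpos: "K > 0" unfolding K_def using t1 \<tau>1pos by simp
  have LK: "ln (1 + S / t 1) = - ln K"
  proof -
    have "1 + S / t 1 = 1 / K" unfolding K_def \<tau>1_def ZS using t1 E1 S0 by (simp add: field_simps)
    then show ?thesis using Kpos by (simp add: ln_div)
  qed
  define \<gamma>c :: "nat \<Rightarrow> real" where "\<gamma>c i = (if i = 1 then 1 / t 1 else 0)" for i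
  define \<tau>c where "\<tau>c i = E i / Z" for i
  have \<tau>cpos: "\<tau>c i > 0" for i unfolding \<tau>c_def E_def using Zpos by simp
  have h\<gamma>: "(1 / t 1) *\<^sub>R P 1 = Q \<gamma>c"
  proof -
    have "P 1 = Q (\<lambda>j. if j = 1 then 1 else 0)" using QP M1 by simp
    then have "(1 / t 1) *\<^sub>R P 1 = Q (\<lambda>i. 1 / t 1 * (if i = 1 then 1 else 0))" by (simp add: Qscale)
    moreover have "(\<lambda>i. 1 / t 1 * (if i = 1 then 1 else 0)) = \<gamma>c" by (rule ext) (simp add: \<gamma>c_def)
    ultimately show ?thesis by simp
  qed
  have h\<tau>: "(1 / Re (trace (mexp (- (\<beta> *\<^sub>R H))))) *\<^sub>R mexp (- (\<beta> *\<^sub>R H)) = Q \<tau>c"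
    unfolding Z_def[symmetric] hmexp Qscale \<tau>c_def by (simp add: Z_def hmexp)
  have \<gamma>0: "\<gamma>c i = 0" if "2 \<le> i" for i using that by (simp add: \<gamma>c_def)
  have R1: "rel_ent (Q \<gamma>c) (Q \<tau>c) = - ln K"
  proof -
    have "rel_ent (Q \<gamma>c) (Q \<tau>c) = (\<Sum>i=1..M. \<gamma>c i * ((if \<gamma>c i > 0 then ln (\<gamma>c i) else 0)
                - (if \<tau>c i > 0 then ln (\<tau>c i) else 0)) * t i)"
      unfolding rel_ent_def mln_def Qmf Qdiff Qmul Qtr ..
    also have "\<dots> = \<gamma>c 1 * ((if \<gamma>c 1 > 0 then ln (\<gamma>c 1) else 0)
                - (if \<tau>c 1 > 0 then ln (\<tau>c 1) else 0)) * t 1"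
      using M1 \<gamma>0 by (intro sum_single) auto
    also have "\<dots> = ln (1 / t 1) - ln \<tau>1"
      using t1 \<tau>cpos[of 1] by (simp add: \<gamma>c_def \<tau>c_def \<tau>1_def)
    also have "\<dots> = - ln K" unfolding K_def using t1 \<tau>1pos by (simp add: ln_div ln_mult)
    finally show ?thesis .
  qed
  have R2: "ln (1 + S / t 1) \<le> ln (1 + exp (- \<beta> * (lam 2 - lam 1)) * ((real CARD('n) - t 1) / t 1))"
  proof -
    have "S \<le> (\<Sum>i=2..M. exp (- \<beta> * (lam 2 - lam 1)) * t i)"
      unfolding S_def
    proof (rule sum_mono)
      fix i assume i: "i \<in> {2..M}"
      have "lam 2 \<le> lam i"
      proof (cases "i = 2")
        case False then show ?thesis using assms(3)[of 2 i] i by auto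
      qed simp
      then have "- \<beta> * (lam i - lam 1) \<le> - \<beta> * (lam 2 - lam 1)"
        using assms(8) by (simp add: mult_left_mono)
      then show "exp (- \<beta> * (lam i - lam 1)) * t i \<le> exp (- \<beta> * (lam 2 - lam 1)) * t i"
        using tpos[of i] i by (intro mult_right_mono) auto
    qed
    also have "\<dots> = exp (- \<beta> * (lam 2 - lam 1)) * (real CARD('n) - t 1)"
    proof -
      have "(\<Sum>i=1..M. t i) = t 1 + (\<Sum>i=Suc 1..M. t i)" using M1 by (rule sum.atLeast_Suc_atMost)
      then have "(\<Sum>i=2..M. t i) = real CARD('n) - t 1" using tsum by (simp add: numeral_2_eq_2)
      then show ?thesis by (simp add: sum_distrib_left[symmetric])
    qed
    finally have "S / t 1 \<le> exp (- \<beta> * (lam 2 - lam 1)) * ((real CARD('n) - t 1) / t 1)"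
      using t1 by (simp add: divide_right_mono)
    moreover have "0 < 1 + S / t 1" using S0 t1 by (simp add: add_pos_nonneg)
    ultimately show ?thesis by simp
  qed
  have R3: "rel_ent (Q \<gamma>c) (Q \<tau>c) = petz_renyi \<alpha> (Q \<gamma>c) (Q \<tau>c)
          \<and> rel_ent (Q \<gamma>c) (Q \<tau>c) = sandwiched_renyi \<alpha> (Q \<gamma>c) (Q \<tau>c)
          \<and> rel_ent (Q \<gamma>c) (Q \<tau>c) = geometric_renyi \<alpha> (Q \<gamma>c) (Q \<tau>c)"
    if \<alpha>: "0 < \<alpha>" "\<alpha> \<noteq> 1" for \<alpha>
  proof (intro conjI)
    have \<tau>1c: "\<tau>c 1 = \<tau>1" by (simp add: \<tau>c_def \<tau>1_def)
    have \<gamma>1c: "\<gamma>c 1 = 1 / t 1" by (simp add: \<gamma>c_def)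
    have "Re (trace (mpow (Q \<gamma>c) \<alpha> ** mpow (Q \<tau>c) (1 - \<alpha>)))
        = (\<Sum>i=1..M. \<gamma>c i powr \<alpha> * \<tau>c i powr (1 - \<alpha>) * t i)"
      unfolding mpow_def Qmf Qmul Qtr ..
    also have "\<dots> = \<gamma>c 1 powr \<alpha> * \<tau>c 1 powr (1 - \<alpha>) * t 1"
      using M1 \<gamma>0 by (intro sum_single) auto
    also have "\<dots> = K powr (1 - \<alpha>)" unfolding \<tau>1c \<gamma>1c K_def using t1 \<tau>1pos by (rule petz_real)
    finally show "rel_ent (Q \<gamma>c) (Q \<tau>c) = petz_renyi \<alpha> (Q \<gamma>c) (Q \<tau>c)"
      unfolding petz_renyi_def R1 using renyi_ln[OF \<alpha>(2)] by simp
    have "Re (trace (mpow (mpow (Q \<tau>c) ((1 - \<alpha>) / (2 * \<alpha>)) ** Q \<gamma>c ** mpow (Q \<tau>c) ((1 - \<alpha>) / (2 * \<alpha>))) \<alpha>))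
        = (\<Sum>i=1..M. (\<tau>c i powr ((1 - \<alpha>) / (2 * \<alpha>)) * \<gamma>c i * \<tau>c i powr ((1 - \<alpha>) / (2 * \<alpha>))) powr \<alpha> * t i)"
      unfolding mpow_def Qmf Qmul Qtr ..
    also have "\<dots> = (\<tau>c 1 powr ((1 - \<alpha>) / (2 * \<alpha>)) * \<gamma>c 1 * \<tau>c 1 powr ((1 - \<alpha>) / (2 * \<alpha>))) powr \<alpha> * t 1"
      using M1 \<gamma>0 by (intro sum_single) auto
    also have "\<dots> = K powr (1 - \<alpha>)" unfolding \<tau>1c \<gamma>1c K_def
      using t1 \<tau>1pos \<alpha>(1) by (intro sand_real) auto
    finally show "rel_ent (Q \<gamma>c) (Q \<tau>c) = sandwiched_renyi \<alpha> (Q \<gamma>c) (Q \<tau>c)"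
      unfolding sandwiched_renyi_def R1 using renyi_ln[OF \<alpha>(2)] by simp
    have "Re (trace (Q \<tau>c ** mpow (mpow (Q \<tau>c) (-1/2) ** Q \<gamma>c ** mpow (Q \<tau>c) (-1/2)) \<alpha>))
        = (\<Sum>i=1..M. \<tau>c i * (\<tau>c i powr (-1/2) * \<gamma>c i * \<tau>c i powr (-1/2)) powr \<alpha> * t i)"
      unfolding mpow_def Qmf Qmul Qtr ..
    also have "\<dots> = \<tau>c 1 * (\<tau>c 1 powr (-1/2) * \<gamma>c 1 * \<tau>c 1 powr (-1/2)) powr \<alpha> * t 1"
      using M1 \<gamma>0 by (intro sum_single) auto
    also have "\<dots> = K powr (1 - \<alpha>)" unfolding \<tau>1c \<gamma>1c K_def
      using t1 \<tau>1pos by (rule geo_real)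
    finally show "rel_ent (Q \<gamma>c) (Q \<tau>c) = geometric_renyi \<alpha> (Q \<gamma>c) (Q \<tau>c)"
      unfolding geometric_renyi_def R1 using renyi_ln[OF \<alpha>(2)] by simp
  qed
  show ?thesis
    unfolding Let_def t_def[symmetric] h\<gamma> h\<tau> S_def[symmetric]
    using R1 R2 R3 LK by simp
qed

end
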